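(* Let $\nabla$ be a metric connection on an anchored metric bundle $(E,\langle\cdot,\cdot\rangle,a_E)$ over $M$, with associated bracket $\circ=\circ^\nabla$. Then for all $e_1,e_2,e_3\in\Gamma(E)$, $$C^\nabla(e_1,e_2)e_3+C^\nabla(e_2,e_3)e_1+C^\nabla(e_3,e_1)e_2+\nabla_{\Delta_{e_3}e_2}e_1+\nabla_{\Delta_{e_1}e_3}e_2+\nabla_{\Delta_{e_2}e_1}e_3+Q(e_1,e_2,e_3)+\big(\mathcal{D}\langle e_1,e_3\rangle\big)\circ e_2$$ $$=e_1\circ(e_2\circ e_3)-(e_1\circ e_2)\circ e_3-e_2\circ(e_1\circ e_3).$$
   Context: Anchored metric bundle: vector bundle $E\to M$, pseudo-metric $\langle\cdot,\cdot\rangle$ (nondegenerate symmetric), bundle map $a_E:E\to TM$. Metric connection: $\mathbb{R}$-bilinear $\nabla$ with $\nabla_{fe_1}e_2=f\nabla_{e_1}e_2$, $\nabla_{e_1}(fe_2)=a_E(e_1)(f)e_2+f\nabla_{e_1}e_2$, $a_E(e_1)\langle e_2,e_3\rangle=\langle\nabla_{e_1}e_2,e_3\rangle+\langle e_2,\nabla_{e_1}e_3\rangle$. $\Delta$: $\langle\Delta_{e_2}e_1,e_3\rangle=\langle\nabla_{e_3}e_1,e_2\rangle$; $e_1\circ^\nabla e_2=\nabla_{e_1}e_2-\nabla_{e_2}e_1+\Delta_{e_2}e_1$. $\mathcal{D}$: $\langle\mathcal{D}(f),e\rangle=a_E(e)(f)$. $C^\nabla(e_1,e_2)=\nabla_{e_1}\nabla_{e_2}-\nabla_{e_2}\nabla_{e_1}-\nabla_{e_1\circ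 e_2}$. $Q$: $\langle Q(e_1,e_2,e_3),t\rangle=\langle C^\nabla(e_1,t)e_2,e_3\rangle+\langle C^\nabla(e_2,t)e_3,e_1\rangle+\langle C^\nabla(e_3,t)e_1,e_2\rangle$ for all $t\in\Gamma(E)$. *)

theory Defs
  imports Main
begin

text \<open>The ring of smooth
functions C-infinity(M) is modelled by a commutative ring 'f, the space of
sections Gamma(E) by an abelian group 's which is an 'f-module via smul.
The pseudo-metric is the induced pairing on sections, the anchor a_E acts on
sections as derivations of the function ring.\<close>

definition anchored_metric_bundle ::
  "('f::comm_ring_1 \<Rightarrow> 's::ab_group_add \<Rightarrow> 's) \<Rightarrow> ('s \<Rightarrow> 's \<Rightarrow> 'f) \<Rightarrow> ('s \<Rightarrow> 'f \<Rightarrow> 'f) \<Rightarrow> bool"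
where
  "anchored_metric_bundle smul pair anc \<longleftrightarrow>
     (\<forall>a b x. smul a (x + b) = smul a x + smul a b) \<and>
     (\<forall>a b x. smul (a + b) x = smul a x + smul b x) \<and>
     (\<forall>a b x. smul a (smul b x) = smul (a * b) x) \<and>
     (\<forall>x. smul 1 x = x) \<and>
     (\<forall>e1 e2. pair e1 e2 = pair e2 e1) \<and>
     (\<forall>e1 e2 e3. pair (e1 + e2) e3 = pair e1 e3 + pair e2 e3) \<and>
     (\<forall>f e1 e2. pair (smul f e1) e2 = f * pair e1 e2) \<and>
     (\<forall>e. (\<forall>t. pair e t = 0) \<longrightarrow> e = 0) \<and>
     (\<forall>e1 e2 g. anc (e1 + e2) g = anc e1 g + anc e2 g) \<and>
     (\<forall>f e g. anc (smul f e) g = f * anc e g) \<and>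
     (\<forall>e g h. anc e (g + h) = anc e g + anc e h) \<and>
     (\<forall>e g h. anc e (g * h) = anc e g * h + g * anc e h)"

definition metric_connection ::
  "('f::comm_ring_1 \<Rightarrow> 's::ab_group_add \<Rightarrow> 's) \<Rightarrow> ('s \<Rightarrow> 's \<Rightarrow> 'f) \<Rightarrow> ('s \<Rightarrow> 'f \<Rightarrow> 'f)
     \<Rightarrow> ('s \<Rightarrow> 's \<Rightarrow> 's) \<Rightarrow> bool"
where
  "metric_connection smul pair anc nabla \<longleftrightarrow>
     (\<forall>e1 e2 e3. nabla (e1 + e2) e3 = nabla e1 e3 + nabla e2 e3) \<and>
     (\<forall>e1 e2 e3. nabla e1 (e2 + e3) = nabla e1 e2 + nabla e1 e3) \<and>
     (\<forall>f e1 e2. nabla (smul f e1) e2 = smul f (nabla e1 e2)) \<and>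
     (\<forall>f e1 e2. nabla e1 (smul f e2) = smul (anc e1 f) e2 + smul f (nabla e1 e2)) \<and>
     (\<forall>e1 e2 e3. anc e1 (pair e2 e3) = pair (nabla e1 e2) e3 + pair e2 (nabla e1 e3))"

text \<open>Delta_e2 e1 is written Delta e2 e1; it is characterised by
  pair (Delta e2 e1) e3 = pair (nabla e3 e1) e2.\<close>
definition is_Delta ::
  "('s \<Rightarrow> 's \<Rightarrow> 'f) \<Rightarrow> ('s \<Rightarrow> 's \<Rightarrow> 's) \<Rightarrow> ('s \<Rightarrow> 's \<Rightarrow> 's) \<Rightarrow> bool"
where
  "is_Delta pair nabla Delta \<longleftrightarrow>
     (\<forall>e1 e2 e3. pair (Delta e2 e1) e3 = pair (nabla e3 e1) e2)"

definition is_Dop :: "('s \<Rightarrow> 's \<Rightarrow> 'f) \<Rightarrow> ('s \<Rightarrow> 'f \<Rightarrow> 'f) \<Rightarrow> ('f \<Rightarrow> 's) \<Rightarrow> bool"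
where
  "is_Dop pair anc Dop \<longleftrightarrow> (\<forall>f e. pair (Dop f) e = anc e f)"

definition bracket ::
  "('s::ab_group_add \<Rightarrow> 's \<Rightarrow> 's) \<Rightarrow> ('s \<Rightarrow> 's \<Rightarrow> 's) \<Rightarrow> 's \<Rightarrow> 's \<Rightarrow> 's"
where
  "bracket nabla Delta e1 e2 = nabla e1 e2 - nabla e2 e1 + Delta e2 e1"

definition curv ::
  "('s::ab_group_add \<Rightarrow> 's \<Rightarrow> 's) \<Rightarrow> ('s \<Rightarrow> 's \<Rightarrow> 's) \<Rightarrow> 's \<Rightarrow> 's \<Rightarrow> 's \<Rightarrow> 's"
where
  "curv nabla Delta e1 e2 e =
     nabla e1 (nabla e2 e) - nabla e2 (nabla e1 e) - nabla (bracket nabla Delta e1 e2) e"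

definition is_Qop ::
  "('s::ab_group_add \<Rightarrow> 's \<Rightarrow> 'f::comm_ring_1) \<Rightarrow> ('s \<Rightarrow> 's \<Rightarrow> 's) \<Rightarrow> ('s \<Rightarrow> 's \<Rightarrow> 's)
     \<Rightarrow> ('s \<Rightarrow> 's \<Rightarrow> 's \<Rightarrow> 's) \<Rightarrow> bool"
where
  "is_Qop pair nabla Delta Q \<longleftrightarrow>
     (\<forall>e1 e2 e3 t. pair (Q e1 e2 e3) t =
        pair (curv nabla Delta e1 t e2) e3 + pair (curv nabla Delta e2 t e3) e1
        + pair (curv nabla Delta e3 t e1) e2)"

end

theory Submission
  imports Defs
begin

lemma hom_lemmas:
  fixes h :: "'a::ab_group_add \<Rightarrow> 'b::ab_group_add"
  assumes "\<And>x y. h (x + y) = h x + h y"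
  shows "h 0 = 0" "h (- x) = - h x" "h (x - y) = h x - h y"
proof -
  show z: "h 0 = 0" using assms[of 0 0] by simp
  have n: "h (- u) = - h u" for u using assms[of u "- u"] z by (simp add: add.commute eq_neg_iff_add_eq_0)
  then show "h (- x) = - h x" by simp
  show "h (x - y) = h x - h y" using assms[of x "- y"] n[of y] by simp
qed

theorem proposition3p10:
  fixes smul :: "'f::comm_ring_1 \<Rightarrow> 's::ab_group_add \<Rightarrow> 's"
    and pair :: "'s \<Rightarrow> 's \<Rightarrow> 'f"
    and anc :: "'s \<Rightarrow> 'f \<Rightarrow> 'f"
    and nabla :: "'s \<Rightarrow> 's \<Rightarrow> 's"
    and Delta :: "'s \<Rightarrow> 's \<Rightarrow> 's"
    and Dop :: "'f \<Rightarrow> 's"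
    and Q :: "'s \<Rightarrow> 's \<Rightarrow> 's \<Rightarrow> 's"
  assumes "anchored_metric_bundle smul pair anc"
    and "metric_connection smul pair anc nabla"
    and "is_Delta pair nabla Delta"
    and "is_Dop pair anc Dop"
    and "is_Qop pair nabla Delta Q"
  shows "curv nabla Delta e1 e2 e3 + curv nabla Delta e2 e3 e1 + curv nabla Delta e3 e1 e2
          + nabla (Delta e3 e2) e1 + nabla (Delta e1 e3) e2 + nabla (Delta e2 e1) e3
          + Q e1 e2 e3 + bracket nabla Delta (Dop (pair e1 e3)) e2
         = bracket nabla Delta e1 (bracket nabla Delta e2 e3)
           - bracket nabla Delta (bracket nabla Delta e1 e2) e3
           - bracket nabla Delta e2 (bracket nabla Delta e1 e3)"
proof -
  have psym: "\<And>x y. pair x y = pair y x"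
    and padd1: "\<And>x y z. pair (x + y) z = pair x z + pair y z"
    and aadd2: "\<And>x g h. anc x (g + h) = anc x g + anc x h"
    using assms(1) unfolding anchored_metric_bundle_def by auto
  have nondeg: "\<And>e. (\<And>t. pair e t = 0) \<Longrightarrow> e = 0"
    using assms(1) unfolding anchored_metric_bundle_def by metis
  have nadd1: "\<And>x y z. nabla (x + y) z = nabla x z + nabla y z"
    and nadd2: "\<And>x y z. nabla x (y + z) = nabla x y + nabla x z"
    and met: "\<And>a x y. anc a (pair x y) = pair (nabla a x) y + pair x (nabla a y)"
    using assms(2) unfolding metric_connection_def by auto
  have D: "\<And>a b c. pair (Delta b a) c = pair (nabla c a) b"
    using assms(3) unfolding is_Delta_def by blast
  have Dop: "\<And>f e. pair (Dop f) e = anc e f"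
    using assms(4) unfolding is_Dop_def by blast
  have Qd: "\<And>a b c t. pair (Q a b c) t =
        pair (curv nabla Delta a t b) c + pair (curv nabla Delta b t c) a
        + pair (curv nabla Delta c t a) b"
    using assms(5) unfolding is_Qop_def by blast
  have padd2: "\<And>x y z. pair z (x + y) = pair z x + pair z y"
    by (metis psym padd1)
  have eqI: "x = y" if "\<And>t. pair x t = pair y t" for x y
  proof -
    have "\<And>t. pair (x - y) t = 0"
      using that padd1[of "x - y" y] by simp
    then show ?thesis using nondeg[of "x - y"] by simp
  qed
  note p1 = hom_lemmas[where h="\<lambda>x. pair x z" for z, OF padd1]
  note p2 = hom_lemmas[where h="\<lambda>x. pair z x" for z, OF padd2]
  note n1 = hom_lemmas[where h="\<lambda>x. nabla x z" for z, OF nadd1]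
  note n2 = hom_lemmas[where h="\<lambda>x. nabla z x" for z, OF nadd2]
  note a2 = hom_lemmas[where h="\<lambda>x. anc z x" for z, OF aadd2]
  have D2: "pair c (Delta b a) = pair (nabla c a) b" for a b c
    using D psym by metis
  have dadd1: "Delta b (x + y) = Delta b x + Delta b y" for b x y
    by (rule eqI) (simp only: D padd1 nadd2)
  have dadd2: "Delta (x + y) a = Delta x a + Delta y a" for a x y
    by (rule eqI) (simp only: D padd1 padd2)
  note d1 = hom_lemmas[where h="\<lambda>x. Delta z x" for z, OF dadd1]
  note d2 = hom_lemmas[where h="\<lambda>x. Delta x z" for z, OF dadd2]
  have Dopeq: "Dop (pair a b) = Delta b a + Delta a b" for a b
    by (rule eqI) (simp only: Dop padd1 D met, metis psym add.commute)
  have R3: "pair (nabla a (Delta b c)) d = anc a (pair (Delta b c) d) - pair (Delta b c) (nabla a d)" for a b c d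
    using met[of a "Delta b c" d] by simp
  have R3': "pair d (nabla a (Delta b c)) = anc a (pair (Delta b c) d) - pair (Delta b c) (nabla a d)" for a b c d
    using R3 psym by metis
  have NS: "pair (nabla (Delta b a) c) d = pair (nabla (Delta d c) a) b" for a b c d
  proof -
    have "pair (nabla (Delta b a) c) d = pair (Delta d c) (Delta b a)" by (simp only: D)
    also have "\<dots> = pair (Delta b a) (Delta d c)" by (rule psym)
    also have "\<dots> = pair (nabla (Delta d c) a) b" by (simp only: D)
    finally show ?thesis .
  qed
  have "pair (curv nabla Delta e1 e2 e3 + curv nabla Delta e2 e3 e1 + curv nabla Delta e3 e1 e2
          + nabla (Delta e3 e2) e1 + nabla (Delta e1 e3) e2 + nabla (Delta e2 e1) e3
          + Q e1 e2 e3 + bracket nabla Delta (Dop (pair e1 e3)) e2) t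
         = pair (bracket nabla Delta e1 (bracket nabla Delta e2 e3)
           - bracket nabla Delta (bracket nabla Delta e1 e2) e3
           - bracket nabla Delta e2 (bracket nabla Delta e1 e3)) t" for t
  proof -
    show ?thesis
    apply (simp only: Qd Dopeq curv_def bracket_def padd1 padd2 p1 p2 nadd1 nadd2 n1 n2 dadd1 dadd2 d1 d2)
    apply (simp only: R3 R3' D D2 met a2 aadd2 padd1 padd2 p1 p2)
    apply (simp only: NS[where a=e1 and b=t and c=e2 and d=e3] NS[where a=e2 and b=t and c=e3 and d=e1] NS[where a=e3 and b=t and c=e1 and d=e2])
    apply (simp add: algebra_simps psym)
    done
  qed
  then show ?thesis by (rule eqI)
qed
end
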